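(* Let $d_1,\dots,d_n$ be positive integers and let $a_1,\dots,a_n\in\mathbb{F}_q^*$. Let $$N_0^*=\#\{(x_1,\dots,x_n)\in(\mathbb{F}_q^* )^n : a_1x_1^{d_1}+\cdots+a_nx_n^{d_n}=0\}.$$ Then $$\left|N_0^*-\frac1q(q-1)^n\right|\le\frac{q-1}{q}+\sum_{e=0}^{n-1}\ \sum_{1\le i_{e+1}<\cdots<i_n\le n}\ \sum_{\substack{1\le l_{i_j}\le d_{i_j}-1\ (e+1\le j\le n)\\ \frac{l_{i_{e+1}}}{d_{i_{e+1}}}+\cdots+\frac{l_{i_n}}{d_{i_n}}\in\mathbb{Z}}}(q-1)\,q^{\frac{n-e}{2}-1},$$ where the innermost sum counts tuples $(l_{i_{e+1}},\dots,l_{i_n})$ of integers with the indicated properties. *)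

theory Defs
  imports Complex_Main "HOL-Library.FuncSet"
begin

text \<open>Finite field F_q is modelled by a type 'a of class finite and field; q = CARD('a).
  Indices are 0-based: i < n.\<close>

definition N0star :: "nat \<Rightarrow> (nat \<Rightarrow> 'a::{finite,field}) \<Rightarrow> (nat \<Rightarrow> nat) \<Rightarrow> nat" where
  "N0star n a d = card {x \<in> Pi\<^sub>E {..<n} (\<lambda>_. UNIV - {0::'a}).
                         (\<Sum>i<n. a i * x i ^ d i) = 0}"

definition Ltuples :: "(nat \<Rightarrow> nat) \<Rightarrow> nat set \<Rightarrow> (nat \<Rightarrow> nat) set" where
  "Ltuples d S = {l \<in> Pi\<^sub>E S (\<lambda>i. {1..d i - 1}).
                   (\<Sum>i\<in>S. real (l i) / real (d i)) \<in> \<int>}"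

end

theory Submission
  imports Defs "HOL-Algebra.Multiplicative_Group" "HOL-Number_Theory.Cong"
    "HOL-Computational_Algebra.Computational_Algebra"
begin

definition FR :: "('a::field) ring" where
  "FR = \<lparr>carrier = UNIV, monoid.mult = (*), one = 1, zero = 0, add = (+)\<rparr>"

lemma FR_cring: "cring (FR::('a::field) ring)"
proof (rule cringI)
  show "abelian_group (FR::'a ring)"
    by (rule abelian_groupI) (auto simp: FR_def add_ac intro: exI[of _ "-x" for x])
  show "comm_monoid (FR::'a ring)"
    by (rule comm_monoidI) (auto simp: FR_def mult_ac)
qed (auto simp: FR_def algebra_simps)

lemma FR_field: "field (FR::('a::field) ring)"
proof -
  interpret cring "FR::'a ring" by (rule FR_cring)
  show ?thesis
  proof (rule field_intro2)
    show "\<zero>\<^bsub>FR\<^esub> \<noteq> \<one>\<^bsub>(FR::'a ring)\<^esub>" by (simp add: FR_def)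
    fix x :: 'a assume "x \<in> carrier FR - {\<zero>\<^bsub>FR\<^esub>}"
    then have "x \<noteq> 0" by (simp add: FR_def)
    then show "x \<in> Units FR" unfolding Units_def
      by (auto simp: FR_def intro!: exI[of _ "inverse x"])
  qed
qed

lemma FR_pow: "x [^]\<^bsub>(FR::('a::field) ring)\<^esub> (n::nat) = x ^ n"
proof -
  interpret cring "FR::'a ring" by (rule FR_cring)
  show ?thesis by (induction n) (auto simp: FR_def)
qed

lemma finite_field_gen:
  "\<exists>g::'a::{finite,field}. \<forall>x. x \<noteq> 0 \<longrightarrow> (\<exists>k::nat. x = g ^ k)"
proof -
  interpret field "FR::'a ring" by (rule FR_field)
  have "finite (carrier (FR::'a ring))" by simp
  from finite_field_mult_group_has_gen[OF this] obtain a where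
    "carrier (mult_of (FR::'a ring)) = {a[^]\<^bsub>FR\<^esub> i | i::nat . i \<in> UNIV}" by blast
  then have "UNIV - {0::'a} = {a ^ i | i::nat. True}"
    by (simp add: FR_pow) (simp add: FR_def)
  then show ?thesis by blast
qed

lemma finite_field_fermat:
  fixes x :: "'a::{finite,field}"
  assumes "x \<noteq> 0" shows "x ^ (card (UNIV::'a set) - 1) = 1"
proof -
  interpret field "FR::'a ring" by (rule FR_field)
  interpret G: group "mult_of (FR::'a ring)" by (rule field_mult_group)
  have "x \<in> carrier (mult_of (FR::'a ring))" using assms by (simp add: FR_def)
  from G.pow_order_eq_1[OF this] have "x [^]\<^bsub>FR\<^esub> Coset.order (mult_of (FR::'a ring)) = 1"
    by (simp add: nat_pow_mult_of) (simp add: FR_def)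
  moreover have "Coset.order (mult_of (FR::'a ring)) = card (UNIV::'a set) - 1"
    by (subst order_mult_of) (auto simp: Coset.order_def FR_def)
  ultimately show ?thesis by (simp add: FR_pow)
qed

lemma cis_root: "N > 0 \<Longrightarrow> cis (2 * pi / real N) ^ N = 1"
  by (simp add: DeMoivre)

lemma cis_root_prim:
  assumes k: "0 < k" "k < N" shows "cis (2 * pi / real N) ^ k \<noteq> 1"
proof
  assume "cis (2 * pi / real N) ^ k = 1"
  then have "cis (real k * (2 * pi / real N)) = 1" by (simp add: DeMoivre)
  then have "cos (real k * (2 * pi / real N)) = 1" by (metis cis.sel(1) one_complex.sel(1))
  then obtain z :: int where z: "real k * (2 * pi / real N) = real_of_int z * 2 * pi"
    by (auto simp: cos_one_2pi_int)
  have "real k / real N = (real k * (2 * pi / real N)) / (2 * pi)" by simp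
  also have "\<dots> = real_of_int z" using z by simp
  finally have "real k / real N = real_of_int z" .
  moreover have "0 < real k / real N" "real k / real N < 1" using k by auto
  ultimately have "0 < z" "z < 1" by auto
  then show False by simp
qed

lemma cis_pow_mod: assumes "N > 0" shows "cis (2 * pi / real N) ^ k = cis (2 * pi / real N) ^ (k mod N)"
proof -
  let ?z = "cis (2 * pi / real N)"
  have "?z ^ k = ?z ^ (N * (k div N) + k mod N)" by (simp only: mult_div_mod_eq)
  also have "\<dots> = (?z ^ N) ^ (k div N) * ?z ^ (k mod N)" by (simp only: power_add power_mult)
  finally show ?thesis using cis_root[OF assms] by simp
qed

lemma add_char_exists:
  "\<exists>psi :: 'a::{finite,field} \<Rightarrow> complex.
     (\<forall>x y. psi (x + y) = psi x * psi y) \<and> (\<forall>x. norm (psi x) = 1) \<and> psi 1 \<noteq> 1"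
proof -
  define p where "p = CHAR('a)"
  have p_pos: "p > 0" unfolding p_def by (rule finite_imp_CHAR_pos) simp
  have p_prime: "prime p" unfolding p_def using p_pos p_def prime_CHAR_semidom by blast
  have p2: "p \<ge> 2" using p_prime prime_ge_2_nat by blast
  have ofp: "of_nat p * (x::'a) = 0" for x unfolding p_def by simp
  have inv: "\<exists>k'. of_nat k * of_nat k' = (1::'a)" if "\<not> p dvd k" for k
  proof -
    have "coprime k p" using p_prime that
      by (metis coprime_commute prime_imp_coprime)
    then obtain k' where "[k * k' = Suc 0] (mod p)" using cong_solve_coprime_nat by blast
    then have "of_nat (k * k') = (of_nat (Suc 0) :: 'a)" unfolding p_def
      by (simp only: of_nat_eq_iff_cong_CHAR)
    then show ?thesis by auto
  qed
  define HH where "HH = {H :: 'a set. 0 \<in> H \<and> (\<forall>x\<in>H. \<forall>y\<in>H. x + y \<in> H) \<and> 1 \<notin> H}"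
  have "finite HH" by simp
  moreover have "{0} \<in> HH" unfolding HH_def by simp
  ultimately obtain H where H: "H \<in> HH" and Hmax: "\<And>K. K \<in> HH \<Longrightarrow> H \<subseteq> K \<Longrightarrow> H = K"
    using finite_has_maximal[of HH] by blast
  have H0: "0 \<in> H" and Hadd: "\<And>x y. x \<in> H \<Longrightarrow> y \<in> H \<Longrightarrow> x + y \<in> H" and H1: "1 \<notin> H"
    using H unfolding HH_def by auto
  have Hnat: "of_nat k * x \<in> H" if "x \<in> H" for k x
    by (induction k) (auto simp: H0 Hadd that distrib_right)
  have Hneg: "- x \<in> H" if "x \<in> H" for x
  proof -
    have "of_nat (p - 1) * x + x = of_nat p * x" using p_pos by (cases p) (simp_all add: distrib_right)
    then have "of_nat (p - 1) * x + x = 0" using ofp[of x] by simp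
    then have "- x = of_nat (p - 1) * x" by (metis add.commute neg_eq_iff_add_eq_0)
    then show ?thesis using Hnat[OF that] by simp
  qed
  have Hdiff: "x - y \<in> H" if "x \<in> H" "y \<in> H" for x y
    using Hadd[OF that(1) Hneg[OF that(2)]] by simp
  have rep: "\<exists>c<p. y - of_nat c \<in> H" for y
  proof (cases "y \<in> H")
    case True then show ?thesis using p_pos by (intro exI[of _ 0]) auto
  next
    case False
    define K where "K = {h + of_nat k * y | h k. h \<in> H}"
    have HK: "H \<subseteq> K"
    proof
      fix x assume "x \<in> H"
      then show "x \<in> K" unfolding K_def by (intro CollectI exI[of _ x] exI[of _ 0]) simp
    qed
    have yK: "y \<in> K" unfolding K_def using H0 by (intro CollectI exI[of _ 0] exI[of _ 1]) auto
    have "1 \<in> K"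
    proof (rule ccontr)
      assume "1 \<notin> K"
      have "K \<in> HH" unfolding HH_def
      proof (intro CollectI conjI ballI)
        show "0 \<in> K" using HK H0 by auto
        show "1 \<notin> K" by fact
        fix a b assume "a \<in> K" "b \<in> K"
        then obtain h1 k1 h2 k2 where "a = h1 + of_nat k1 * y" "b = h2 + of_nat k2 * y" "h1 \<in> H" "h2 \<in> H"
          unfolding K_def by auto
        then show "a + b \<in> K" unfolding K_def
          by (intro CollectI exI[of _ "h1 + h2"] exI[of _ "k1 + k2"]) (auto simp: Hadd algebra_simps)
      qed
      then have "H = K" using Hmax HK by blast
      then show False using yK False by simp
    qed
    then obtain h k where hk: "1 = h + of_nat k * y" "h \<in> H" unfolding K_def by auto
    have "\<not> p dvd k"
    proof
      assume "p dvd k"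
      then have "of_nat k = (0::'a)" unfolding p_def by (simp add: of_nat_eq_0_iff_char_dvd)
      then show False using hk H1 by simp
    qed
    then obtain k' where k': "of_nat k * of_nat k' = (1::'a)" using inv by blast
    have "of_nat k' = of_nat k' * (h + of_nat k * y)" using hk(1) by simp
    also have "\<dots> = of_nat k' * h + (of_nat k * of_nat k') * y" by (simp add: algebra_simps)
    finally have "y - of_nat k' = - (of_nat k' * h)" using k' by (simp add: algebra_simps)
    then have "y - of_nat k' \<in> H" using Hneg[OF Hnat[OF hk(2)]] by simp
    moreover have "of_nat k' = (of_nat (k' mod p) :: 'a)" unfolding p_def
      by (simp only: of_nat_eq_iff_cong_CHAR) (simp add: cong_def)
    ultimately show ?thesis using p_pos by (intro exI[of _ "k' mod p"]) auto
  qed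
  have uniq: "c1 = c2" if "c1 < p" "c2 < p" "y - of_nat c1 \<in> H" "y - of_nat c2 \<in> H" for y c1 c2
  proof (rule ccontr)
    assume ne: "c1 \<noteq> c2"
    have main: "False" if "a < p" "b < p" "b < a" "of_nat a - of_nat b \<in> H" for a b
    proof -
      have "of_nat (a - b) \<in> H" using that by (simp add: of_nat_diff)
      moreover have "\<not> p dvd (a - b)" using that by (auto dest: dvd_imp_le)
      then obtain k' where "of_nat (a - b) * of_nat k' = (1::'a)" using inv by blast
      ultimately have "1 \<in> H" using Hnat[of "of_nat (a - b)" k'] by (simp add: mult.commute)
      then show False using H1 by simp
    qed
    have d1: "of_nat c2 - of_nat c1 \<in> H" using Hdiff[OF that(3) that(4)] by simp
    have d2: "of_nat c1 - of_nat c2 \<in> H" using Hdiff[OF that(4) that(3)] by simp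
    show False
    proof (cases "c1 < c2")
      case True then show False using main[OF that(2) that(1) True d1] by simp
    next
      case False then have "c2 < c1" using ne by simp
      then show False using main[OF that(1) that(2) _ d2] by simp
    qed
  qed
  define cv where "cv y = (THE c. c < p \<and> y - of_nat c \<in> H)" for y
  have cv: "cv y < p \<and> y - of_nat (cv y) \<in> H" for y
  proof -
    obtain c where "c < p" "y - of_nat c \<in> H" using rep by blast
    then have "\<exists>!c. c < p \<and> y - of_nat c \<in> H" using uniq by blast
    then show ?thesis unfolding cv_def by (rule theI')
  qed
  have cv_eq: "cv y = c" if "c < p" "y - of_nat c \<in> H" for y c
    using uniq[OF cv[THEN conjunct1] that(1) cv[THEN conjunct2] that(2)] .
  have cv_add: "cv (x + y) = (cv x + cv y) mod p" for x y
  proof (rule cv_eq)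
    show "(cv x + cv y) mod p < p" using p_pos by simp
    have "of_nat ((cv x + cv y) mod p) = (of_nat (cv x + cv y) :: 'a)" unfolding p_def
      by (simp only: of_nat_eq_iff_cong_CHAR) (simp add: cong_def)
    then have "x + y - of_nat ((cv x + cv y) mod p) = (x - of_nat (cv x)) + (y - of_nat (cv y))"
      by simp
    moreover have "(x - of_nat (cv x)) + (y - of_nat (cv y)) \<in> H"
      using Hadd cv[of x] cv[of y] by blast
    ultimately show "x + y - of_nat ((cv x + cv y) mod p) \<in> H" by (simp only:)
  qed
  have cv1: "cv 1 = 1" by (rule cv_eq) (use p2 H0 in auto)
  define z where "z = cis (2 * pi / real p)"
  define psi where "psi y = z ^ cv y" for y
  have "psi (x + y) = psi x * psi y" for x y
    unfolding psi_def cv_add z_def using cis_pow_mod[OF p_pos, of "cv x + cv y"] by (simp add: power_add)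
  moreover have "norm (psi x) = 1" for x unfolding psi_def z_def by (simp add: norm_power)
  moreover have "psi 1 \<noteq> 1" unfolding psi_def cv1 z_def using cis_root_prim[of 1 p] p2 by simp
  ultimately show ?thesis by blast
qed

locale gs =
  fixes g :: "'a::{finite,field}" and psi :: "'a \<Rightarrow> complex" and w :: complex
    and m :: nat and c0 :: 'a
  assumes m_def: "m = card (UNIV::'a set) - 1"
    and m_pos: "m > 0"
    and g_m: "g ^ m = 1"
    and g_bij: "bij_betw (\<lambda>k. g ^ k) {..<m} (UNIV - {0})"
    and psi_add: "psi (x + y) = psi x * psi y"
    and psi_norm: "norm (psi x) = 1"
    and psi_nt: "psi c0 \<noteq> 1"
    and w_m: "w ^ m = 1"
    and w_prim: "0 < k \<Longrightarrow> k < m \<Longrightarrow> w ^ k \<noteq> 1"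
begin

lemma q_m: "card (UNIV::'a set) = m + 1" using m_def m_pos by simp

definition dl :: "'a \<Rightarrow> nat" where "dl x = the_inv_into {..<m} (\<lambda>k. g ^ k) x"

lemma g_inj: "inj_on (\<lambda>k. g ^ k) {..<m}" using g_bij bij_betw_def by blast

lemma dl: assumes "x \<noteq> 0" shows "dl x < m" "g ^ dl x = x"
proof -
  have "x \<in> (\<lambda>k. g ^ k) ` {..<m}" using g_bij assms by (auto simp: bij_betw_def)
  then show "g ^ dl x = x" unfolding dl_def by (rule f_the_inv_into_f[OF g_inj])
  show "dl x < m" unfolding dl_def using the_inv_into_into[OF g_inj, of x "{..<m}"] \<open>x \<in> _\<close> by auto
qed

lemma g_pow_mod: "g ^ k = g ^ (k mod m)"
proof -
  have "g ^ k = g ^ (m * (k div m) + k mod m)" by (simp only: mult_div_mod_eq)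
  also have "\<dots> = (g ^ m) ^ (k div m) * g ^ (k mod m)" by (simp only: power_add power_mult)
  finally have "g ^ k = (g ^ m) ^ (k div m) * g ^ (k mod m)" .
  then show ?thesis using g_m by simp
qed

lemma w_pow_mod: "w ^ k = w ^ (k mod m)"
proof -
  have "w ^ k = w ^ (m * (k div m) + k mod m)" by (simp only: mult_div_mod_eq)
  also have "\<dots> = (w ^ m) ^ (k div m) * w ^ (k mod m)" by (simp only: power_add power_mult)
  finally have "w ^ k = (w ^ m) ^ (k div m) * w ^ (k mod m)" .
  then show ?thesis using w_m by simp
qed

lemma w_cong: "a mod m = b mod m \<Longrightarrow> w ^ a = w ^ b"
  using w_pow_mod[of a] w_pow_mod[of b] by simp

lemma g_nz: "g \<noteq> 0"
proof
  assume "g = 0" then have "g ^ m = 0" using m_pos by simp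
  then show False using g_m by simp
qed

lemma dl_gpow: "dl (g ^ k) = k mod m"
proof -
  have "g ^ k \<noteq> 0" using g_nz by simp
  have "g ^ dl (g ^ k) = g ^ (k mod m)" using dl(2)[OF \<open>g ^ k \<noteq> 0\<close>] g_pow_mod[of k] by simp
  moreover have "dl (g ^ k) \<in> {..<m}" "k mod m \<in> {..<m}" using dl(1)[OF \<open>g ^ k \<noteq> 0\<close>] m_pos by auto
  ultimately show ?thesis by (rule inj_onD[OF g_inj])
qed


lemma w_norm: "norm w = 1"
proof -
  have "norm w ^ m = 1" using w_m by (metis norm_one norm_power)
  then show ?thesis using m_pos power_eq_1_iff[of "norm w" m] by simp
qed

definition chi :: "nat \<Rightarrow> 'a \<Rightarrow> complex" where "chi j x = w ^ (j * dl x)"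

lemma chi_gpow: "chi j (g ^ k) = w ^ (j * k)"
  unfolding chi_def dl_gpow by (rule w_cong) (simp add: mod_mult_right_eq)

lemma chi_mult: assumes "x \<noteq> 0" "y \<noteq> 0" shows "chi j (x * y) = chi j x * chi j y"
proof -
  have "x * y = g ^ (dl x + dl y)" using dl(2)[OF assms(1)] dl(2)[OF assms(2)]
    by (simp add: power_add)
  then have "chi j (x * y) = chi j (g ^ (dl x + dl y))" by simp
  also have "\<dots> = w ^ (j * dl x + j * dl y)" unfolding chi_gpow by (simp add: distrib_left)
  also have "\<dots> = chi j x * chi j y" unfolding chi_def by (rule power_add)
  finally show ?thesis .
qed

lemma chi_add: "chi (j1 + j2) x = chi j1 x * chi j2 x"
  unfolding chi_def by (simp add: power_add distrib_right)

lemma chi_m: "chi (j * m) x = 1"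
  unfolding chi_def using w_cong[of "j * m * dl x" 0] by simp

lemma chi_norm: "norm (chi j x) = 1"
  unfolding chi_def by (simp add: norm_power w_norm)

lemma chi_one: "chi j 1 = 1"
  using chi_gpow[of j 0] by simp

lemma sum_units: "(\<Sum>x\<in>UNIV - {0}. f x) = (\<Sum>k<m. f (g ^ k))"
  by (rule sum.reindex_bij_betw[OF g_bij, symmetric])

lemma w_orth: "(\<Sum>k<m. w ^ (j * k)) = (if m dvd j then of_nat m else 0)"
proof (cases "m dvd j")
  case True
  then have "w ^ (j * k) = 1" for k using w_cong[of "j*k" 0] by auto
  then show ?thesis using True by simp
next
  case False
  have "w ^ j = w ^ (j mod m)" by (rule w_pow_mod)
  moreover have "j mod m > 0" "j mod m < m" using False m_pos by (auto simp: mod_greater_zero_iff_not_dvd)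
  ultimately have ne: "w ^ j \<noteq> 1" using w_prim by simp
  have "(\<Sum>k<m. w ^ (j * k)) = (\<Sum>k<m. (w ^ j) ^ k)" by (simp add: power_mult)
  also have "\<dots> = ((w ^ j) ^ m - 1) / (w ^ j - 1)" by (rule geometric_sum[OF ne])
  also have "(w ^ j) ^ m = (w ^ m) ^ j" by (simp only: power_mult[symmetric] mult.commute)
  also have "\<dots> = 1" by (simp add: w_m)
  finally show ?thesis using False by simp
qed

lemma chi_orth: "(\<Sum>x\<in>UNIV - {0}. chi j x) = (if m dvd j then of_nat m else 0)"
  unfolding sum_units chi_gpow by (rule w_orth)

end

context gs begin

lemma psi0: "psi 0 = 1"
proof -
  have "psi 0 = psi 0 * psi 0" using psi_add[of 0 0] by simp
  moreover have "psi 0 \<noteq> 0" using psi_norm[of 0] by auto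
  ultimately show ?thesis by (metis mult_cancel_left2)
qed

lemma psi_neg: "psi (- x) = cnj (psi x)"
proof -
  have "psi x * psi (-x) = 1" using psi_add[of x "-x"] psi0 by simp
  moreover have "psi x * cnj (psi x) = 1"
    using complex_norm_square[of "psi x"] psi_norm[of x] by simp
  moreover have "psi x \<noteq> 0" using psi_norm[of x] by auto
  ultimately show ?thesis by (metis mult_left_cancel)
qed

lemma reindex_mult_units:
  fixes c :: 'a assumes "c \<noteq> 0" shows "(\<Sum>z\<in>UNIV - {0}. f (c * z)) = (\<Sum>z\<in>UNIV - {0}. f z)"
  by (rule sum.reindex_bij_witness[of _ "\<lambda>z. z / c" "\<lambda>z. c * z"]) (use assms in auto)

lemma reindex_mult_all:
  fixes c :: 'a assumes "c \<noteq> 0" shows "(\<Sum>z\<in>UNIV. f (c * z)) = (\<Sum>z\<in>UNIV. f z)"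
  by (rule sum.reindex_bij_witness[of _ "\<lambda>z. z / c" "\<lambda>z. c * z"]) (use assms in auto)

lemma psi_sum_all: "(\<Sum>y\<in>UNIV. psi y) = 0"
proof -
  have "(\<Sum>y\<in>UNIV. psi (y + c0)) = (\<Sum>y\<in>UNIV. psi y)"
    by (rule sum.reindex_bij_witness[of _ "\<lambda>z. z - c0" "\<lambda>z. z + c0"]) auto
  then have "psi c0 * (\<Sum>y\<in>UNIV. psi y) = (\<Sum>y\<in>UNIV. psi y)"
    by (simp add: psi_add sum_distrib_left mult.commute)
  then have "(psi c0 - 1) * (\<Sum>y\<in>UNIV. psi y) = 0" by (simp add: algebra_simps)
  then show ?thesis using psi_nt by simp
qed

lemma psi_orth: "(\<Sum>y\<in>UNIV. psi (c * y)) = (if c = 0 then of_nat (m + 1) else 0)"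
proof (cases "c = 0")
  case True then show ?thesis using q_m by (simp add: psi0)
next
  case False then show ?thesis using reindex_mult_all[OF False, of psi] psi_sum_all by simp
qed

lemma psi_orth_units: "(\<Sum>y\<in>UNIV - {0}. psi (c * y)) = (if c = 0 then of_nat (m + 1) else 0) - 1"
proof -
  have "(\<Sum>y\<in>UNIV. psi (c * y)) = psi (c * 0) + (\<Sum>y\<in>UNIV - {0}. psi (c * y))"
    by (subst sum.remove[of _ 0]) auto
  then show ?thesis using psi_orth[of c] psi0 by simp
qed

lemma psi_sum: "finite A \<Longrightarrow> psi (\<Sum>i\<in>A. f i) = (\<Prod>i\<in>A. psi (f i))"
  by (induction A rule: finite_induct) (auto simp: psi0 psi_add)

lemma chi_inv: assumes "x \<noteq> 0" shows "chi j x * cnj (chi j x) = 1"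
  using complex_norm_square[of "chi j x"] chi_norm[of j x] by simp

end

definition Jset :: "nat \<Rightarrow> nat \<Rightarrow> nat set" where "Jset m d = {j. j < m \<and> m dvd j * d}"

context gs begin

lemma g_pow_eq: "g ^ a = g ^ b \<longleftrightarrow> a mod m = b mod m"
proof
  assume "g ^ a = g ^ b"
  then have "g ^ (a mod m) = g ^ (b mod m)" using g_pow_mod[of a] g_pow_mod[of b] by simp
  moreover have "a mod m \<in> {..<m}" "b mod m \<in> {..<m}" using m_pos by auto
  ultimately show "a mod m = b mod m" by (rule inj_onD[OF g_inj])
next
  assume "a mod m = b mod m" then show "g ^ a = g ^ b" using g_pow_mod[of a] g_pow_mod[of b] by simp
qed

lemma mod_iff_dvd: "(a::nat) mod m = b mod m \<longleftrightarrow> m dvd (a + (m - 1) * b)"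
proof -
  have "a mod m = b mod m \<longleftrightarrow> int a mod int m = int b mod int m"
    by (metis of_nat_eq_iff zmod_int)
  also have "\<dots> \<longleftrightarrow> int m dvd (int a - int b)" by (rule mod_eq_dvd_iff)
  also have "\<dots> \<longleftrightarrow> int m dvd (int a - int b + int m * int b)"
    by (simp add: dvd_add_left_iff)
  also have "int a - int b + int m * int b = int (a + (m - 1) * b)"
    using m_pos by (cases m) (auto simp: algebra_simps)
  also have "int m dvd int (a + (m - 1) * b) \<longleftrightarrow> m dvd (a + (m - 1) * b)"
    by (rule of_nat_dvd_iff)
  finally show ?thesis .
qed


lemma J_fin: "finite (Jset m d)" unfolding Jset_def by auto

lemma count_roots:
  assumes y: "y \<noteq> 0"
  shows "of_nat (card {x \<in> UNIV - {0}. x ^ d = y}) = (\<Sum>j\<in>Jset m d. chi (j * (m - 1)) y)"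
proof -
  have key: "of_nat m * (if x ^ d = y then 1 else 0) =
      (\<Sum>j<m. chi (j * d) x * chi (j * (m - 1)) y)" if x: "x \<noteq> 0" for x
  proof -
    have "x ^ d = y \<longleftrightarrow> g ^ (dl x * d) = g ^ dl y"
      using dl(2)[OF x] dl(2)[OF y] by (simp add: power_mult)
    also have "\<dots> \<longleftrightarrow> m dvd (d * dl x + (m - 1) * dl y)"
      unfolding g_pow_eq mod_iff_dvd by (simp add: mult.commute)
    finally have eq: "x ^ d = y \<longleftrightarrow> m dvd (d * dl x + (m - 1) * dl y)" .
    have "(\<Sum>j<m. chi (j * d) x * chi (j * (m - 1)) y) =
        (\<Sum>j<m. w ^ ((d * dl x + (m - 1) * dl y) * j))"
      unfolding chi_def by (intro sum.cong refl) (simp add: power_add[symmetric] algebra_simps)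
    also have "\<dots> = (if m dvd (d * dl x + (m - 1) * dl y) then of_nat m else 0)" by (rule w_orth)
    finally show ?thesis using eq by simp
  qed
  have "of_nat m * of_nat (card {x \<in> UNIV - {0}. x ^ d = y}) =
      of_nat m * (\<Sum>x\<in>UNIV - {0}. (if x ^ d = y then 1 else 0 :: complex))"
    using sum.inter_filter[of "UNIV - {0}" "\<lambda>_. 1::complex" "\<lambda>x. x ^ d = y"] by simp
  also have "\<dots> = (\<Sum>x\<in>UNIV - {0}. of_nat m * (if x ^ d = y then 1 else 0 :: complex))"
    by (rule sum_distrib_left)
  also have "\<dots> = (\<Sum>x\<in>UNIV - {0}. \<Sum>j<m. chi (j * d) x * chi (j * (m - 1)) y)"
    by (intro sum.cong refl key) auto
  also have "\<dots> = (\<Sum>j<m. (\<Sum>x\<in>UNIV - {0}. chi (j * d) x) * chi (j * (m - 1)) y)"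
    by (subst sum.swap) (simp add: sum_distrib_right)
  also have "\<dots> = (\<Sum>j<m. (if m dvd j * d then of_nat m * chi (j * (m - 1)) y else 0))"
    unfolding chi_orth by (intro sum.cong refl) auto
  also have "\<dots> = (\<Sum>j\<in>{j\<in>{..<m}. m dvd j * d}. of_nat m * chi (j * (m - 1)) y)"
    by (rule sum.inter_filter[symmetric]) simp
  also have "{j\<in>{..<m}. m dvd j * d} = Jset m d" unfolding Jset_def by auto
  also have "(\<Sum>j\<in>Jset m d. of_nat m * chi (j * (m - 1)) y) = of_nat m * (\<Sum>j\<in>Jset m d. chi (j * (m - 1)) y)"
    by (rule sum_distrib_left[symmetric])
  finally show ?thesis using m_pos by simp
qed

definition G :: "nat \<Rightarrow> complex" where "G j = (\<Sum>u\<in>UNIV - {0}. chi (j * (m - 1)) u * psi u)"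

lemma G0: "G 0 = -1"
  unfolding G_def chi_def using psi_orth_units[of 1] by simp

lemma gauss_gen:
  assumes h: "\<not> m dvd h"
  shows "(\<Sum>u\<in>UNIV - {0}. chi h u * psi u) * cnj (\<Sum>u\<in>UNIV - {0}. chi h u * psi u) = of_nat (m + 1)"
proof -
  let ?S = "\<lambda>u. chi h u * psi u"
  have "(\<Sum>u\<in>UNIV - {0}. ?S u) * cnj (\<Sum>v\<in>UNIV - {0}. ?S v) =
      (\<Sum>v\<in>UNIV - {0}. \<Sum>u\<in>UNIV - {0}. ?S u * cnj (?S v))"
    unfolding cnj_sum sum_product by (rule sum.swap)
  also have "\<dots> = (\<Sum>v\<in>UNIV - {0}. \<Sum>s\<in>UNIV - {0}. ?S (v * s) * cnj (?S v))"
  proof (rule sum.cong[OF refl])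
    fix v assume "v \<in> UNIV - {0::'a}"
    then show "(\<Sum>u\<in>UNIV - {0}. ?S u * cnj (?S v)) = (\<Sum>s\<in>UNIV - {0}. ?S (v * s) * cnj (?S v))"
      using reindex_mult_units[of v "\<lambda>u. ?S u * cnj (?S v)"] by simp
  qed
  also have "\<dots> = (\<Sum>v\<in>UNIV - {0}. \<Sum>s\<in>UNIV - {0}. chi h s * psi ((s - 1) * v))"
  proof (intro sum.cong refl)
    fix v s assume v: "v \<in> UNIV - {0::'a}" and s: "s \<in> UNIV - {0::'a}"
    have "?S (v * s) * cnj (?S v) = chi h s * (chi h v * cnj (chi h v)) * (psi (v * s) * psi (- v))"
      using v s by (simp add: chi_mult psi_neg algebra_simps)
    also have "\<dots> = chi h s * psi ((s - 1) * v)"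
      using v by (simp add: chi_inv psi_add[symmetric] algebra_simps)
    finally show "?S (v * s) * cnj (?S v) = chi h s * psi ((s - 1) * v)" .
  qed
  also have "\<dots> = (\<Sum>s\<in>UNIV - {0}. chi h s * (\<Sum>v\<in>UNIV - {0}. psi ((s - 1) * v)))"
    by (subst sum.swap) (simp add: sum_distrib_left)
  also have "\<dots> = (\<Sum>s\<in>UNIV - {0}. chi h s * ((if s = (1::'a) then of_nat (m + 1) else 0) - 1))"
    unfolding psi_orth_units by simp
  also have "\<dots> = (\<Sum>s\<in>UNIV - {0}. (if s = (1::'a) then of_nat (m + 1) else 0) - chi h s)"
    by (intro sum.cong refl) (auto simp: chi_one)
  also have "\<dots> = (\<Sum>s\<in>UNIV - {0}. (if s = (1::'a) then of_nat (m + 1) else 0)) - (\<Sum>s\<in>UNIV - {0}. chi h s)"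
    by (simp only: sum_subtractf)
  also have "\<dots> = of_nat (m + 1)"
    using h by (simp add: chi_orth sum.delta)
  finally show ?thesis .
qed

lemma G_norm: assumes "0 < j" "j < m" shows "norm (G j) = sqrt (real (m + 1))"
proof -
  have "\<not> m dvd j * (m - 1)"
  proof
    assume "m dvd j * (m - 1)"
    moreover have "j * (m - 1) + j = j * m" using m_pos by (cases m) auto
    ultimately have "m dvd j" using dvd_add_right_iff[of m "j * (m - 1)" j] by simp
    then show False using assms by (auto dest: dvd_imp_le)
  qed
  from gauss_gen[OF this] have "G j * cnj (G j) = of_nat (m + 1)" unfolding G_def .
  then have "complex_of_real ((norm (G j))^2) = of_real (real (m + 1))"
    by (simp only: complex_norm_square) simp
  then have "(norm (G j))^2 = real (m + 1)" using of_real_eq_iff by blast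
  then show ?thesis by (metis norm_ge_zero real_sqrt_unique)
qed

end

definition AAset :: "nat \<Rightarrow> nat \<Rightarrow> (nat \<Rightarrow> nat) \<Rightarrow> (nat \<Rightarrow> nat) set" where
  "AAset m n d = {js \<in> Pi\<^sub>E {..<n} (\<lambda>i. Jset m (d i)). m dvd (\<Sum>i<n. js i)}"

context gs begin

lemma card_units: "card (UNIV - {0::'a}) = m"
  using q_m by (simp add: card_Diff_singleton)

lemma S_lemma:
  assumes t: "t \<noteq> 0" and a: "a \<noteq> 0"
  shows "(\<Sum>y\<in>UNIV - {0}. psi (t * a * y ^ d)) = (\<Sum>j\<in>Jset m d. chi j (t * a) * G j)"
proof -
  have ta: "t * a \<noteq> 0" using t a by simp
  have "(\<Sum>y\<in>UNIV - {0}. psi (t * a * y ^ d)) =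
      (\<Sum>z\<in>UNIV - {0}. \<Sum>y\<in>{y. y \<in> UNIV - {0} \<and> y ^ d = z}. psi (t * a * y ^ d))"
    by (rule sum.group[symmetric]) auto
  also have "\<dots> = (\<Sum>z\<in>UNIV - {0}. of_nat (card {y \<in> UNIV - {0}. y ^ d = z}) * psi (t * a * z))"
    by (intro sum.cong refl) simp
  also have "\<dots> = (\<Sum>z\<in>UNIV - {0}. \<Sum>j\<in>Jset m d. chi (j * (m - 1)) z * psi (t * a * z))"
  proof (rule sum.cong[OF refl])
    fix z :: 'a assume "z \<in> UNIV - {0}"
    then have z: "z \<noteq> 0" by simp
    show "of_nat (card {y \<in> UNIV - {0}. y ^ d = z}) * psi (t * a * z) =
        (\<Sum>j\<in>Jset m d. chi (j * (m - 1)) z * psi (t * a * z))"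
      unfolding count_roots[OF z] by (rule sum_distrib_right)
  qed
  also have "\<dots> = (\<Sum>j\<in>Jset m d. \<Sum>z\<in>UNIV - {0}. chi (j * (m - 1)) z * psi (t * a * z))"
    by (rule sum.swap)
  also have "\<dots> = (\<Sum>j\<in>Jset m d. chi j (t * a) * G j)"
  proof (rule sum.cong[OF refl])
    fix j
    have e: "chi (j * (m - 1)) z = chi j (t * a) * chi (j * (m - 1)) (t * a * z)" if z: "z \<noteq> 0" for z
    proof -
      have "chi j (t * a) * chi (j * (m - 1)) (t * a * z) =
          chi j (t * a) * chi (j * (m - 1)) (t * a) * chi (j * (m - 1)) z"
        using ta z by (simp add: chi_mult)
      also have "chi j (t * a) * chi (j * (m - 1)) (t * a) = chi (j * m) (t * a)"
      proof -
        have "j + j * (m - 1) = j * m" using m_pos by (cases m) auto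
        then show ?thesis by (simp only: chi_add[symmetric])
      qed
      finally show ?thesis by (simp add: chi_m)
    qed
    have "(\<Sum>z\<in>UNIV - {0}. chi (j * (m - 1)) z * psi (t * a * z)) =
        (\<Sum>z\<in>UNIV - {0}. chi j (t * a) * (chi (j * (m - 1)) (t * a * z) * psi (t * a * z)))"
    proof (rule sum.cong[OF refl])
      fix z :: 'a assume "z \<in> UNIV - {0}"
      then have z: "z \<noteq> 0" by simp
      show "chi (j * (m - 1)) z * psi (t * a * z) =
          chi j (t * a) * (chi (j * (m - 1)) (t * a * z) * psi (t * a * z))"
        by (subst e[OF z]) (simp only: mult.assoc)
    qed
    also have "\<dots> = chi j (t * a) * (\<Sum>z\<in>UNIV - {0}. chi (j * (m - 1)) (t * a * z) * psi (t * a * z))"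
      by (rule sum_distrib_left[symmetric])
    also have "(\<Sum>z\<in>UNIV - {0}. chi (j * (m - 1)) (t * a * z) * psi (t * a * z)) = G j"
      unfolding G_def by (rule reindex_mult_units[OF ta])
    finally show "(\<Sum>z\<in>UNIV - {0}. chi (j * (m - 1)) z * psi (t * a * z)) = chi j (t * a) * G j" .
  qed
  finally show ?thesis .
qed

lemma chi_prod: "(\<Prod>i\<in>A. chi (js i) t) = chi (\<Sum>i\<in>A. js i) t"
  unfolding chi_def by (simp add: power_sum[symmetric] sum_distrib_right)


lemma main_identity:
  fixes a :: "nat \<Rightarrow> 'a" and n :: nat and d :: "nat \<Rightarrow> nat"
  assumes a: "\<And>i. i < n \<Longrightarrow> a i \<noteq> 0"
  shows "of_nat (m + 1) * of_nat (card {x \<in> Pi\<^sub>E {..<n} (\<lambda>_. UNIV - {0::'a}). (\<Sum>i<n. a i * x i ^ d i) = 0})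
     = of_nat m ^ n + (\<Sum>js\<in>AAset m n d. of_nat m * (\<Prod>i<n. chi (js i) (a i) * G (js i)))"
proof -
  define P where "P = Pi\<^sub>E {..<n} (\<lambda>_. UNIV - {0::'a})"
  define f where "f x = (\<Sum>i<n. a i * x i ^ d i)" for x
  have finP: "finite P" unfolding P_def by (simp add: finite_PiE)
  have "of_nat (m + 1) * of_nat (card {x \<in> P. f x = 0}) =
      (\<Sum>x\<in>P. (if f x = 0 then of_nat (m + 1) else 0 :: complex))"
    using sum.inter_filter[OF finP, of "\<lambda>_. of_nat (m + 1) :: complex" "\<lambda>x. f x = 0"]
    by (simp add: mult.commute)
  also have "\<dots> = (\<Sum>x\<in>P. \<Sum>t\<in>UNIV. psi (t * f x))"
    by (intro sum.cong refl) (simp add: psi_orth mult.commute[of _ "f _"])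
  also have "\<dots> = (\<Sum>t\<in>UNIV. \<Sum>x\<in>P. psi (t * f x))" by (rule sum.swap)
  also have "\<dots> = (\<Sum>t\<in>UNIV. \<Prod>i<n. \<Sum>y\<in>UNIV - {0}. psi (t * a i * y ^ d i))"
  proof (rule sum.cong[OF refl])
    fix t
    have "(\<Sum>x\<in>P. psi (t * f x)) = (\<Sum>x\<in>P. \<Prod>i<n. psi (t * a i * x i ^ d i))"
      unfolding f_def by (intro sum.cong refl) (simp add: sum_distrib_left psi_sum mult.assoc)
    also have "\<dots> = (\<Prod>i<n. \<Sum>y\<in>UNIV - {0}. psi (t * a i * y ^ d i))"
      unfolding P_def by (rule prod_sum_PiE[symmetric]) auto
    finally show "(\<Sum>x\<in>P. psi (t * f x)) = (\<Prod>i<n. \<Sum>y\<in>UNIV - {0}. psi (t * a i * y ^ d i))" .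
  qed
  also have "\<dots> = (\<Prod>i<n. \<Sum>y\<in>UNIV - {0}. psi (0 * a i * y ^ d i)) +
      (\<Sum>t\<in>UNIV - {0}. \<Prod>i<n. \<Sum>y\<in>UNIV - {0}. psi (t * a i * y ^ d i))"
    by (subst sum.remove[of _ 0]) auto
  also have "(\<Prod>i<n. \<Sum>y\<in>UNIV - {0}. psi (0 * a i * y ^ d i)) = of_nat m ^ n"
    by (simp add: psi0 card_units)
  also have "(\<Sum>t\<in>UNIV - {0}. \<Prod>i<n. \<Sum>y\<in>UNIV - {0}. psi (t * a i * y ^ d i)) =
      (\<Sum>t\<in>UNIV - {0}. \<Sum>js\<in>Pi\<^sub>E {..<n} (\<lambda>i. Jset m (d i)).
          chi (\<Sum>i<n. js i) t * (\<Prod>i<n. chi (js i) (a i) * G (js i)))"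
  proof (rule sum.cong[OF refl])
    fix t :: 'a assume "t \<in> UNIV - {0}"
    then have t: "t \<noteq> 0" by simp
    have "(\<Prod>i<n. \<Sum>y\<in>UNIV - {0}. psi (t * a i * y ^ d i)) = (\<Prod>i<n. \<Sum>j\<in>Jset m (d i). chi j (t * a i) * G j)"
      using S_lemma[OF t a] by (intro prod.cong refl) auto
    also have "\<dots> = (\<Sum>js\<in>Pi\<^sub>E {..<n} (\<lambda>i. Jset m (d i)). \<Prod>i<n. chi (js i) (t * a i) * G (js i))"
      by (rule prod_sum_PiE) (auto simp: J_fin)
    also have "\<dots> = (\<Sum>js\<in>Pi\<^sub>E {..<n} (\<lambda>i. Jset m (d i)).
          chi (\<Sum>i<n. js i) t * (\<Prod>i<n. chi (js i) (a i) * G (js i)))"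
    proof (rule sum.cong[OF refl])
      fix js
      have "(\<Prod>i<n. chi (js i) (t * a i) * G (js i)) = (\<Prod>i<n. chi (js i) t * (chi (js i) (a i) * G (js i)))"
        using a t by (intro prod.cong refl) (simp add: chi_mult)
      also have "\<dots> = (\<Prod>i<n. chi (js i) t) * (\<Prod>i<n. chi (js i) (a i) * G (js i))"
        by (rule prod.distrib)
      finally show "(\<Prod>i<n. chi (js i) (t * a i) * G (js i)) =
          chi (\<Sum>i<n. js i) t * (\<Prod>i<n. chi (js i) (a i) * G (js i))" by (simp add: chi_prod)
    qed
    finally show "(\<Prod>i<n. \<Sum>y\<in>UNIV - {0}. psi (t * a i * y ^ d i)) = (\<Sum>js\<in>Pi\<^sub>E {..<n} (\<lambda>i. Jset m (d i)).
          chi (\<Sum>i<n. js i) t * (\<Prod>i<n. chi (js i) (a i) * G (js i)))" .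
  qed
  also have "\<dots> = (\<Sum>js\<in>Pi\<^sub>E {..<n} (\<lambda>i. Jset m (d i)).
          (\<Sum>t\<in>UNIV - {0}. chi (\<Sum>i<n. js i) t) * (\<Prod>i<n. chi (js i) (a i) * G (js i)))"
    by (subst sum.swap) (simp add: sum_distrib_right)
  also have "\<dots> = (\<Sum>js\<in>Pi\<^sub>E {..<n} (\<lambda>i. Jset m (d i)).
          (if m dvd (\<Sum>i<n. js i) then of_nat m * (\<Prod>i<n. chi (js i) (a i) * G (js i)) else 0))"
    by (intro sum.cong refl) (simp add: chi_orth)
  also have "\<dots> = (\<Sum>js\<in>AAset m n d. of_nat m * (\<Prod>i<n. chi (js i) (a i) * G (js i)))"
    unfolding AAset_def by (rule sum.inter_filter[symmetric]) (simp add: finite_PiE J_fin)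
  finally show ?thesis unfolding P_def f_def .
qed

end

definition suppj :: "nat \<Rightarrow> (nat \<Rightarrow> nat) \<Rightarrow> nat set" where
  "suppj n js = {i \<in> {..<n}. js i \<noteq> 0}"

context gs begin


lemma J_less: "j \<in> Jset m d \<Longrightarrow> j < m" unfolding Jset_def by auto

lemma norm_bound:
  shows "norm (\<Sum>js\<in>AAset m n d. of_nat m * (\<Prod>i<n. chi (js i) (a i) * G (js i)))
    \<le> (\<Sum>js\<in>AAset m n d. real m * sqrt (real (m + 1)) ^ card (suppj n js))"
proof -
  have "norm (\<Sum>js\<in>AAset m n d. of_nat m * (\<Prod>i<n. chi (js i) (a i) * G (js i)))
     \<le> (\<Sum>js\<in>AAset m n d. norm (of_nat m * (\<Prod>i<n. chi (js i) (a i) * G (js i))))"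
    by (rule norm_sum)
  also have "\<dots> = (\<Sum>js\<in>AAset m n d. real m * sqrt (real (m + 1)) ^ card (suppj n js))"
  proof (rule sum.cong[OF refl])
    fix js assume js: "js \<in> AAset m n d"
    have "norm (of_nat m * (\<Prod>i<n. chi (js i) (a i) * G (js i))) =
        real m * (\<Prod>i<n. norm (G (js i)))"
      by (simp add: prod_norm[symmetric] norm_mult chi_norm)
    also have "(\<Prod>i<n. norm (G (js i))) = (\<Prod>i<n. if js i = 0 then 1 else sqrt (real (m + 1)))"
    proof (rule prod.cong[OF refl])
      fix i assume "i \<in> {..<n}"
      then have "js i < m" using js J_less unfolding AAset_def by (auto simp: PiE_def Pi_def)
      then show "norm (G (js i)) = (if js i = 0 then 1 else sqrt (real (m + 1)))"
        by (auto simp: G0 G_norm)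
    qed
    also have "\<dots> = sqrt (real (m + 1)) ^ card (suppj n js)"
      by (simp add: prod.If_cases suppj_def Int_def Collect_conj_eq[symmetric] conj_commute)
    finally show "norm (of_nat m * (\<Prod>i<n. chi (js i) (a i) * G (js i))) =
        real m * sqrt (real (m + 1)) ^ card (suppj n js)" .
  qed
  finally show ?thesis .
qed

end

context gs begin

lemma AA_fin: "finite (AAset m n d)"
proof -
  have "finite (Pi\<^sub>E {..<n} (\<lambda>i. Jset m (d i)))" by (rule finite_PiE) (simp_all add: J_fin)
  then show ?thesis unfolding AAset_def by simp
qed

lemma card_empty_supp: "card {js \<in> AAset m n d. suppj n js = {}} \<le> 1"
proof -
  have "finite {js \<in> AAset m n d. suppj n js = {}}" using AA_fin by simp
  moreover have "\<forall>x\<in>{js \<in> AAset m n d. suppj n js = {}}. \<forall>y\<in>{js \<in> AAset m n d. suppj n js = {}}. x = y"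
  proof (intro ballI)
    fix x y assume x: "x \<in> {js \<in> AAset m n d. suppj n js = {}}" and y: "y \<in> {js \<in> AAset m n d. suppj n js = {}}"
    show "x = y"
    proof (rule PiE_ext)
      show "x \<in> Pi\<^sub>E {..<n} (\<lambda>i. Jset m (d i))" "y \<in> Pi\<^sub>E {..<n} (\<lambda>i. Jset m (d i))"
        using x y unfolding AAset_def by auto
      fix i assume "i \<in> {..<n}"
      then show "x i = y i" using x y unfolding suppj_def by auto
    qed
  qed
  ultimately have "card {js \<in> AAset m n d. suppj n js = {}} \<le> Suc 0" by (simp only: card_le_Suc0_iff_eq)
  then show ?thesis by simp
qed

lemma card_supp_le:
  assumes d: "\<And>i. i < n \<Longrightarrow> d i > 0" and T: "T \<subseteq> {..<n}"
  shows "card {js \<in> AAset m n d. suppj n js = T} \<le> card (Ltuples d T)"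
proof -
  define phi where "phi js = restrict (\<lambda>i. js i * d i div m) T" for js :: "nat \<Rightarrow> nat"
  have finT: "finite T" using T finite_subset by blast
  have finL: "finite (Ltuples d T)"
    unfolding Ltuples_def by (rule finite_subset[of _ "Pi\<^sub>E T (\<lambda>i. {1..d i - 1})"]) (auto intro!: finite_PiE finT)
  have facts: "js i < m \<and> 0 < js i \<and> m dvd js i * d i \<and> 0 < d i"
    if js: "js \<in> AAset m n d" "suppj n js = T" and i: "i \<in> T" for js i
  proof -
    have "i < n" using i T by auto
    then have "js i \<in> Jset m (d i)" using js(1) unfolding AAset_def by auto
    moreover have "js i \<noteq> 0" using js(2) i unfolding suppj_def by auto
    ultimately show ?thesis unfolding Jset_def using d[OF \<open>i < n\<close>] by auto
  qed
  have eqm: "js i * d i div m * m = js i * d i"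
    if "js \<in> AAset m n d" "suppj n js = T" "i \<in> T" for js i
    using facts[OF that] by simp
  show ?thesis
  proof (rule card_inj_on_le[OF _ _ finL])
    show "inj_on phi {js \<in> AAset m n d. suppj n js = T}"
    proof (rule inj_onI)
      fix x y assume x: "x \<in> {js \<in> AAset m n d. suppj n js = T}" and y: "y \<in> {js \<in> AAset m n d. suppj n js = T}"
        and e: "phi x = phi y"
      show "x = y"
      proof (rule PiE_ext)
        show "x \<in> Pi\<^sub>E {..<n} (\<lambda>i. Jset m (d i))" "y \<in> Pi\<^sub>E {..<n} (\<lambda>i. Jset m (d i))"
          using x y unfolding AAset_def by auto
        fix i assume i: "i \<in> {..<n}"
        show "x i = y i"
        proof (cases "i \<in> T")
          case True
          have e1: "x i * d i div m = y i * d i div m" using fun_cong[OF e, of i] True unfolding phi_def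
            by simp
          have "x i * d i = x i * d i div m * m" using eqm[of x i] x True by simp
          also have "\<dots> = y i * d i div m * m" by (simp only: e1)
          also have "\<dots> = y i * d i" using eqm[of y i] y True by simp
          finally have "x i * d i = y i * d i" .
          moreover have "0 < d i" using facts[of x i] x True by simp
          ultimately show ?thesis by simp
        next
          case False
          have "i \<notin> suppj n x" "i \<notin> suppj n y" using x y False by auto
          then have "x i = 0" "y i = 0" using i unfolding suppj_def by auto
          then show ?thesis by simp
        qed
      qed
    qed
    show "phi ` {js \<in> AAset m n d. suppj n js = T} \<subseteq> Ltuples d T"
    proof
      fix l assume "l \<in> phi ` {js \<in> AAset m n d. suppj n js = T}"
      then obtain js where js: "js \<in> AAset m n d" "suppj n js = T" and l: "l = phi js" by auto
      have lrange: "js i * d i div m \<in> {1..d i - 1}" if i: "i \<in> T" for i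
      proof -
        note f = facts[OF js i]
        have "js i * d i \<ge> m" using f by (intro dvd_imp_le) auto
        then have "js i * d i div m > 0" using f by (simp add: div_greater_zero_iff)
        then have "js i * d i div m \<ge> 1" by simp
        moreover have "js i * d i < m * d i" using f by simp
        then have "js i * d i div m < d i" using f by (simp add: div_less_iff_less_mult mult.commute)
        ultimately show ?thesis by auto
      qed
      have "(\<Sum>i\<in>T. real (l i) / real (d i)) = (\<Sum>i\<in>T. real (js i) / real m)"
      proof (rule sum.cong[OF refl])
        fix i assume i: "i \<in> T"
        note f = facts[OF js i]
        have "real (js i * d i div m) * real m = real (js i) * real (d i)"
          using arg_cong[OF eqm[OF js i], of real] by (simp only: of_nat_mult)
        then show "real (l i) / real (d i) = real (js i) / real m"
          using f i unfolding l phi_def by (simp add: field_simps)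
      qed
      also have "\<dots> = real (\<Sum>i\<in>T. js i) / real m" by (simp add: sum_divide_distrib)
      also have "(\<Sum>i\<in>T. js i) = (\<Sum>i<n. js i)"
        by (rule sum.mono_neutral_left) (use T js in \<open>auto simp: suppj_def\<close>)
      also have "real (\<Sum>i<n. js i) / real m = real ((\<Sum>i<n. js i) div m)"
        using js unfolding AAset_def by (simp add: real_of_nat_div)
      finally have "(\<Sum>i\<in>T. real (l i) / real (d i)) \<in> \<int>" by simp
      moreover have "l \<in> Pi\<^sub>E T (\<lambda>i. {1..d i - 1})" unfolding l phi_def using lrange by auto
      ultimately show "l \<in> Ltuples d T" unfolding Ltuples_def by auto
    qed
  qed
qed

end

lemma sqrt_pow_div: assumes x: "x > 0" shows "sqrt x ^ k / x = x powr (real k / 2 - 1)"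
proof -
  have "sqrt x ^ k = (x powr (1/2)) ^ k" using x by (simp add: powr_half_sqrt)
  also have "\<dots> = x powr (real k / 2)"
    using x by (simp add: powr_realpow[symmetric] powr_powr)
  finally have "sqrt x ^ k = x powr (real k / 2)" .
  then show ?thesis using x by (simp add: powr_diff)
qed

context gs begin

lemma comb_bound:
  fixes s :: real
  assumes d: "\<And>i. i < n \<Longrightarrow> d i > 0" and s: "s \<ge> 0"
  shows "(\<Sum>js\<in>AAset m n d. real m * s ^ card (suppj n js)) \<le> real m +
    (\<Sum>e<n. \<Sum>S\<in>{S. S \<subseteq> {..<n} \<and> card S = n - e}. real (card (Ltuples d S)) * real m * s ^ (n - e))"
proof -
  define H where "H S = real (card (Ltuples d S)) * real m * s ^ card S" for S
  have "(\<Sum>js\<in>AAset m n d. real m * s ^ card (suppj n js)) =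
      (\<Sum>T\<in>Pow {..<n}. \<Sum>js\<in>{js. js \<in> AAset m n d \<and> suppj n js = T}. real m * s ^ card (suppj n js))"
    by (rule sum.group[symmetric]) (auto simp: AA_fin suppj_def)
  also have "\<dots> = (\<Sum>T\<in>Pow {..<n}. real (card {js \<in> AAset m n d. suppj n js = T}) * (real m * s ^ card T))"
    by (intro sum.cong refl) simp
  also have "\<dots> = real (card {js \<in> AAset m n d. suppj n js = {}}) * (real m * s ^ card ({}::nat set)) +
      (\<Sum>T\<in>Pow {..<n} - {{}}. real (card {js \<in> AAset m n d. suppj n js = T}) * (real m * s ^ card T))"
    by (subst sum.remove[of _ "{}"]) auto
  also have "\<dots> \<le> 1 * (real m * 1) + (\<Sum>T\<in>Pow {..<n} - {{}}. H T)"
  proof (rule add_mono)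
    show "real (card {js \<in> AAset m n d. suppj n js = {}}) * (real m * s ^ card ({}::nat set)) \<le> 1 * (real m * 1)"
    proof -
      have "real (card {js \<in> AAset m n d. suppj n js = {}}) \<le> 1" using card_empty_supp[of n d] by simp
      then have "real (card {js \<in> AAset m n d. suppj n js = {}}) * real m \<le> 1 * real m"
        by (rule mult_right_mono) simp
      then show ?thesis by simp
    qed
    show "(\<Sum>T\<in>Pow {..<n} - {{}}. real (card {js \<in> AAset m n d. suppj n js = T}) * (real m * s ^ card T))
        \<le> (\<Sum>T\<in>Pow {..<n} - {{}}. H T)"
    proof (rule sum_mono)
      fix T assume "T \<in> Pow {..<n} - {{}}"
      then have "card {js \<in> AAset m n d. suppj n js = T} \<le> card (Ltuples d T)"
        using card_supp_le[OF d] by auto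
      then show "real (card {js \<in> AAset m n d. suppj n js = T}) * (real m * s ^ card T) \<le> H T"
        unfolding H_def using s by (simp add: mult.assoc mult_right_mono)
    qed
  qed
  also have "(\<Sum>T\<in>Pow {..<n} - {{}}. H T) =
      (\<Sum>e<n. \<Sum>T\<in>{T. T \<in> Pow {..<n} - {{}} \<and> n - card T = e}. H T)"
  proof (rule sum.group[symmetric])
    show "(\<lambda>T. n - card T) ` (Pow {..<n} - {{}}) \<subseteq> {..<n}"
    proof
      fix e assume "e \<in> (\<lambda>T. n - card T) ` (Pow {..<n} - {{}})"
      then obtain T where T: "T \<subseteq> {..<n}" "T \<noteq> {}" and e: "e = n - card T" by auto
      have "finite T" using T finite_subset by blast
      then have "card T > 0" using T by auto
      moreover have "card T \<le> n" using card_mono[OF _ T(1)] by simp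
      ultimately show "e \<in> {..<n}" using e by auto
    qed
  qed auto
  also have "\<dots> = (\<Sum>e<n. \<Sum>S\<in>{S. S \<subseteq> {..<n} \<and> card S = n - e}. real (card (Ltuples d S)) * real m * s ^ (n - e))"
  proof (rule sum.cong[OF refl])
    fix e assume e: "e \<in> {..<n}"
    have "{T. T \<in> Pow {..<n} - {{}} \<and> n - card T = e} = {S. S \<subseteq> {..<n} \<and> card S = n - e}"
    proof (rule Set.set_eqI, rule iffI)
      fix T assume "T \<in> {T. T \<in> Pow {..<n} - {{}} \<and> n - card T = e}"
      then have T: "T \<subseteq> {..<n}" "n - card T = e" by auto
      moreover have "card T \<le> n" using card_mono[OF _ T(1)] by simp
      ultimately show "T \<in> {S. S \<subseteq> {..<n} \<and> card S = n - e}" by auto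
    next
      fix T assume "T \<in> {S. S \<subseteq> {..<n} \<and> card S = n - e}"
      then have T: "T \<subseteq> {..<n}" "card T = n - e" by auto
      then have "T \<noteq> {}" using e by auto
      then show "T \<in> {T. T \<in> Pow {..<n} - {{}} \<and> n - card T = e}" using T e by auto
    qed
    then show "(\<Sum>T\<in>{T. T \<in> Pow {..<n} - {{}} \<and> n - card T = e}. H T) =
        (\<Sum>S\<in>{S. S \<subseteq> {..<n} \<and> card S = n - e}. real (card (Ltuples d S)) * real m * s ^ (n - e))"
      unfolding H_def by (intro sum.cong) auto
  qed
  finally show ?thesis by simp
qed

lemma final:
  fixes a :: "nat \<Rightarrow> 'a" and n :: nat and d :: "nat \<Rightarrow> nat"
  assumes d: "\<And>i. i < n \<Longrightarrow> d i > 0" and a: "\<And>i. i < n \<Longrightarrow> a i \<noteq> 0"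
  shows "\<bar>real (N0star n a d) - real m ^ n / real (m + 1)\<bar>
    \<le> real m / real (m + 1)
       + (\<Sum>e<n. \<Sum>S\<in>{S. S \<subseteq> {..<n} \<and> card S = n - e}.
            real (card (Ltuples d S)) * real m * real (m + 1) powr (real (n - e) / 2 - 1))"
proof -
  define N where "N = N0star n a d"
  define E where "E = (\<Sum>js\<in>AAset m n d. of_nat m * (\<Prod>i<n. chi (js i) (a i) * G (js i)))"
  define s where "s = sqrt (real (m + 1))"
  define B where "B = (\<Sum>e<n. \<Sum>S\<in>{S. S \<subseteq> {..<n} \<and> card S = n - e}. real (card (Ltuples d S)) * real m * s ^ (n - e))"
  have id: "of_nat (m + 1) * of_nat N = of_nat m ^ n + E"
    using main_identity[where n=n and a=a and d=d, OF a] unfolding N_def N0star_def E_def by simp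
  have "complex_of_real (real (m + 1) * real N - real m ^ n) = E"
    using id by simp
  then have "\<bar>real (m + 1) * real N - real m ^ n\<bar> = norm E"
    by (metis norm_of_real)
  also have "norm E \<le> (\<Sum>js\<in>AAset m n d. real m * s ^ card (suppj n js))"
    unfolding E_def s_def by (rule norm_bound)
  also have "\<dots> \<le> real m + B"
    unfolding B_def s_def by (rule comb_bound) (simp_all add: d)
  finally have bnd: "\<bar>real (m + 1) * real N - real m ^ n\<bar> \<le> real m + B" .
  have pos: "real (m + 1) > 0" by simp
  have "\<bar>real N - real m ^ n / real (m + 1)\<bar> = \<bar>real (m + 1) * real N - real m ^ n\<bar> / real (m + 1)"
  proof -
    have "real N - real m ^ n / real (m + 1) = (real (m + 1) * real N - real m ^ n) / real (m + 1)"
      using pos by (simp add: field_simps)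
    then show ?thesis by (simp only: abs_divide abs_of_nat)
  qed
  also have "\<dots> \<le> (real m + B) / real (m + 1)"
    by (rule divide_right_mono[OF bnd]) simp
  also have "\<dots> = real m / real (m + 1) + B / real (m + 1)" by (rule add_divide_distrib)
  also have "B / real (m + 1) = (\<Sum>e<n. \<Sum>S\<in>{S. S \<subseteq> {..<n} \<and> card S = n - e}.
            real (card (Ltuples d S)) * real m * real (m + 1) powr (real (n - e) / 2 - 1))"
    unfolding B_def sum_divide_distrib s_def
  proof (intro sum.cong refl)
    fix e S
    have "real (card (Ltuples d S)) * real m * sqrt (real (m + 1)) ^ (n - e) / real (m + 1) =
        real (card (Ltuples d S)) * real m * (sqrt (real (m + 1)) ^ (n - e) / real (m + 1))" by simp
    also have "\<dots> = real (card (Ltuples d S)) * real m * real (m + 1) powr (real (n - e) / 2 - 1)"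
      by (subst sqrt_pow_div) simp_all
    finally show "real (card (Ltuples d S)) * real m * sqrt (real (m + 1)) ^ (n - e) / real (m + 1) =
        real (card (Ltuples d S)) * real m * real (m + 1) powr (real (n - e) / 2 - 1)" .
  qed
  finally show ?thesis unfolding N_def .
qed

end

lemma gen_bij:
  "\<exists>g::'a::{finite,field}. g ^ (card (UNIV::'a set) - 1) = 1 \<and>
     bij_betw (\<lambda>k. g ^ k) {..<card (UNIV::'a set) - 1} (UNIV - {0})"
proof -
  define m where "m = card (UNIV::'a set) - 1"
  obtain g0 :: 'a where g0: "\<And>x. x \<noteq> 0 \<Longrightarrow> \<exists>k::nat. x = g0 ^ k" using finite_field_gen by blast
  define g where "g = (if g0 = 0 then 1 else g0)"
  have gen: "\<exists>k::nat. x = g ^ k" if x: "x \<noteq> 0" for x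
  proof (cases "g0 = 0")
    case True
    obtain k where "x = g0 ^ k" using g0[OF x] by blast
    then have "x = 1" using True x by (cases k) auto
    then show ?thesis by (intro exI[of _ 0]) simp
  next
    case False then show ?thesis using g0[OF x] unfolding g_def by simp
  qed
  have gnz: "g \<noteq> 0" unfolding g_def by simp
  have gm: "g ^ m = 1" unfolding m_def by (rule finite_field_fermat[OF gnz])
  have two: "card (UNIV::'a set) \<ge> 2"
  proof -
    have "{0, 1::'a} \<subseteq> UNIV" by simp
    then have "card {0, 1::'a} \<le> card (UNIV::'a set)" by (rule card_mono[rotated]) simp
    then show ?thesis by simp
  qed
  have mpos: "m > 0" unfolding m_def using two by simp
  have gmod: "g ^ k = g ^ (k mod m)" for k
  proof -
    have "g ^ k = g ^ (m * (k div m) + k mod m)" by (simp only: mult_div_mod_eq)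
    also have "\<dots> = (g ^ m) ^ (k div m) * g ^ (k mod m)" by (simp only: power_add power_mult)
    finally show ?thesis using gm by simp
  qed
  have img: "(\<lambda>k. g ^ k) ` {..<m} = UNIV - {0}"
  proof
    show "(\<lambda>k. g ^ k) ` {..<m} \<subseteq> UNIV - {0}" using gnz by auto
    show "UNIV - {0} \<subseteq> (\<lambda>k. g ^ k) ` {..<m}"
    proof
      fix x assume "x \<in> UNIV - {0::'a}"
      then obtain k where "x = g ^ k" using gen by blast
      then have "x = g ^ (k mod m)" using gmod by simp
      moreover have "k mod m \<in> {..<m}" using mpos by simp
      ultimately show "x \<in> (\<lambda>k. g ^ k) ` {..<m}" by blast
    qed
  qed
  have "card (UNIV - {0::'a}) = m" unfolding m_def by (simp add: card_Diff_singleton)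
  then have "inj_on (\<lambda>k. g ^ k) {..<m}" using img by (intro eq_card_imp_inj_on) auto
  then have "bij_betw (\<lambda>k. g ^ k) {..<m} (UNIV - {0})" using img by (simp add: bij_betw_def)
  then show ?thesis using gm unfolding m_def by blast
qed

theorem mainTheorem9:
  fixes n :: nat and d :: "nat \<Rightarrow> nat" and a :: "nat \<Rightarrow> 'a::{finite,field}"
  assumes "\<And>i. i < n \<Longrightarrow> d i > 0"
    and "\<And>i. i < n \<Longrightarrow> a i \<noteq> 0"
  shows "\<bar>real (N0star n a d) - (real (card (UNIV::'a set)) - 1) ^ n / real (card (UNIV::'a set))\<bar>
    \<le> (real (card (UNIV::'a set)) - 1) / real (card (UNIV::'a set))
       + (\<Sum>e<n. \<Sum>S\<in>{S. S \<subseteq> {..<n} \<and> card S = n - e}.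
            real (card (Ltuples d S)) * (real (card (UNIV::'a set)) - 1)
              * real (card (UNIV::'a set)) powr (real (n - e) / 2 - 1))"
proof -
  define m where "m = card (UNIV::'a set) - 1"
  have two: "card (UNIV::'a set) \<ge> 2"
  proof -
    have "{0, 1::'a} \<subseteq> UNIV" by simp
    then have "card {0, 1::'a} \<le> card (UNIV::'a set)" by (rule card_mono[rotated]) simp
    then show ?thesis by simp
  qed
  have mpos: "m > 0" unfolding m_def using two by simp
  obtain g :: 'a where g: "g ^ m = 1" "bij_betw (\<lambda>k. g ^ k) {..<m} (UNIV - {0})"
    using gen_bij unfolding m_def by blast
  obtain psi :: "'a \<Rightarrow> complex" where psi: "\<And>x y. psi (x + y) = psi x * psi y"
    "\<And>x. norm (psi x) = 1" "psi 1 \<noteq> 1"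
    using add_char_exists by blast
  define w where "w = cis (2 * pi / real m)"
  interpret gs g psi w m 1
  proof
    show "m = card (UNIV::'a set) - 1" by (rule m_def)
    show "0 < m" by (rule mpos)
    show "w ^ m = 1" unfolding w_def using cis_root[OF mpos] .
    fix k assume "0 < k" "k < m"
    then show "w ^ k \<noteq> 1" unfolding w_def by (rule cis_root_prim)
  qed (use g psi in auto)
  have q1: "real (card (UNIV::'a set)) = real (m + 1)" unfolding m_def using two by simp
  have q2: "real (card (UNIV::'a set)) - 1 = real m" unfolding m_def using two by (simp add: of_nat_diff)
  show ?thesis unfolding q2 unfolding q1 by (rule final) (use assms in auto)
qed

end
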